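(* Let $1\le r<\infty$, $d\in\mathbb{N}$, $\varepsilon>0$. Let $a=\lceil(8/\varepsilon+3)^r\rceil$ and $M=\{k_j\}_{j=1}^\infty$ with $k_j=a^{j-1}$. Let $\bar m,\bar n\in[M]^d$ with $m_1<n_1<\dots<m_d<n_d$, let $k>n_d$, let $u=((a_s)_{s=1}^d,(b_s)_{s=1}^d,c)\in S_{\ell_\infty^{2d+1}}$, and let $F=(F_i)_{i=1}^k\colon S_{\ell_\infty^k}\to S_{\ell_r^k}$ be a step preserving function with $F_i(x(\bar m,u,k))=0$ for all $i\in(m_d,k]$. Then \[\|F(x(\bar m,u,k))-F(x(\bar n,u,k))\|_r>1-\varepsilon.\]
   Context: $S_{\ell_p^k}$ denotes the unit sphere of $(\mathbb{R}^k,\|\cdot\|_p)$. $[M]^d$ is the set of increasing $d$-tuples from $M$; $m_0=0$. $1_A\in\mathbb{R}^k$ is the indicator vector of $A$ and $1_{(a,b]}=1_{\{i:a<i\le b\}}$. With $P=2\mathbb{N}$ (even integers) and $P^c=\mathbb{N}\setminus P$: $x(\bar m,u,k)=\sum_{s=1}^da_s1_{(m_{s-1},m_s]\cap P}+\sum_{s=1}^db_s1_{(m_{s-1},m_s]\cap P^c}+c1_{(m_d,k]}$. $F$ is step preserving if for all $x$ and $i,j$, $x_i=x_j$ implies $F_i(x)=F_j(x)$. *)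

theory Defs
  imports "HOL-Analysis.Analysis"
begin

text \<open>Vectors of \<open>\<real>\<^sup>k\<close> are represented as functions \<open>nat \<Rightarrow> real\<close>
  supported on the coordinates \<open>{1..k}\<close>.\<close>

definition norm_inf :: "nat \<Rightarrow> (nat \<Rightarrow> real) \<Rightarrow> real" where
  "norm_inf k x = Max (insert 0 ((\<lambda>i. \<bar>x i\<bar>) ` {1..k}))"

definition norm_lp :: "real \<Rightarrow> nat \<Rightarrow> (nat \<Rightarrow> real) \<Rightarrow> real" where
  "norm_lp p k x = (\<Sum>i\<in>{1..k}. \<bar>x i\<bar> powr p) powr (1 / p)"

definition sphere_inf :: "nat \<Rightarrow> (nat \<Rightarrow> real) set" where
  "sphere_inf k = {x. (\<forall>i. i \<notin> {1..k} \<longrightarrow> x i = 0) \<and> norm_inf k x = 1}"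

definition sphere_lp :: "real \<Rightarrow> nat \<Rightarrow> (nat \<Rightarrow> real) set" where
  "sphere_lp p k = {x. (\<forall>i. i \<notin> {1..k} \<longrightarrow> x i = 0) \<and> norm_lp p k x = 1}"

definition step_preserving :: "nat \<Rightarrow> ((nat \<Rightarrow> real) \<Rightarrow> (nat \<Rightarrow> real)) \<Rightarrow> bool" where
  "step_preserving k F \<longleftrightarrow>
     (\<forall>x\<in>sphere_inf k. \<forall>i\<in>{1..k}. \<forall>j\<in>{1..k}. x i = x j \<longrightarrow> F x i = F x j)"

definition incr_tuples :: "nat set \<Rightarrow> nat \<Rightarrow> (nat \<Rightarrow> nat) set" where
  "incr_tuples M d = {m. (\<forall>s\<in>{1..d}. m s \<in> M) \<and> (\<forall>s\<in>{1..<d}. m s < m (Suc s))}"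

definition tup :: "(nat \<Rightarrow> nat) \<Rightarrow> nat \<Rightarrow> nat" where
  "tup m s = (if s = 0 then 0 else m s)"

definition indic :: "nat set \<Rightarrow> nat \<Rightarrow> real" where
  "indic A i = (if i \<in> A then 1 else 0)"

definition xvec :: "nat \<Rightarrow> (nat \<Rightarrow> nat) \<Rightarrow> (nat \<Rightarrow> real) \<Rightarrow> (nat \<Rightarrow> real) \<Rightarrow> real \<Rightarrow> nat \<Rightarrow> (nat \<Rightarrow> real)" where
  "xvec d m a b c k = (\<lambda>i.
      (\<Sum>s\<in>{1..d}. a s * indic ({tup m (s - 1)<..m s} \<inter> {i. even i}) i)
    + (\<Sum>s\<in>{1..d}. b s * indic ({tup m (s - 1)<..m s} \<inter> {i. odd i}) i)
    + c * indic {tup m d<..k} i)"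

definition in_sphere_u :: "nat \<Rightarrow> (nat \<Rightarrow> real) \<Rightarrow> (nat \<Rightarrow> real) \<Rightarrow> real \<Rightarrow> bool" where
  "in_sphere_u d a b c \<longleftrightarrow>
     Max ({\<bar>a s\<bar> | s. s \<in> {1..d}} \<union> {\<bar>b s\<bar> | s. s \<in> {1..d}} \<union> {\<bar>c\<bar>}) = 1"

end

theory Submission
  imports Defs
begin


lemma fiber_sum:
  fixes h :: "nat \<Rightarrow> real" and I :: "nat set"
  assumes h0: "\<And>j. h j \<ge> 0" and I: "I \<subseteq> {1..P}" and P: "even P" "P > 0"
    and bnd: "lo + P * (L + 1) \<le> hi"
    and eq: "\<And>i j. i \<in> I \<Longrightarrow> j \<in> {lo<..hi} \<Longrightarrow> even i = even j \<Longrightarrow> h j = h i"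
  shows "real L * sum h I \<le> sum h {lo<..hi}"
proof -
  define b0 where "b0 = P * (lo div P)"
  have b0le: "b0 \<le> lo" unfolding b0_def by (simp add: mult.commute)
  have b0gt: "lo < b0 + P" unfolding b0_def using P(2)
    by (metis add.commute div_mult_mod_eq mod_less_divisor nat_add_left_cancel_less mult.commute)
  define \<psi> where "\<psi> = (\<lambda>(i::nat, q::nat). b0 + P + i + P * q)"
  have fin: "finite I" using I finite_subset by blast
  have inj: "inj_on \<psi> (I \<times> {..<L})"
  proof (rule inj_onI)
    fix x y assume x: "x \<in> I \<times> {..<L}" and y: "y \<in> I \<times> {..<L}" and e: "\<psi> x = \<psi> y"
    obtain i q where xi: "x = (i, q)" by force
    obtain i' q' where yi: "y = (i', q')" by force
    have i1: "1 \<le> i" "i \<le> P" "1 \<le> i'" "i' \<le> P" using x y I xi yi by auto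
    have "(i - 1) + P * q = (i' - 1) + P * q'" using e i1 unfolding \<psi>_def xi yi by simp
    moreover obtain i0 i0' where i0: "i0 = i - 1" "i0' = i' - 1" by blast
    ultimately have e2: "i0 + P * q = i0' + P * q'" by simp
    have "i0 < P" "i0' < P" using i1 i0 by auto
    have "(i0 + P * q) mod P = i0" using \<open>i0 < P\<close> by simp
    moreover have "(i0' + P * q') mod P = i0'" using \<open>i0' < P\<close> by simp
    ultimately have "i0 = i0'" using e2 by metis
    then have "i - 1 = i' - 1" using i0 by simp
    moreover then have "P * q = P * q'" using \<open>(i - 1) + P * q = (i' - 1) + P * q'\<close> by simp
    ultimately show "x = y" using i1 P xi yi by simp
  qed
  have sub: "\<psi> ` (I \<times> {..<L}) \<subseteq> {lo<..hi}"
  proof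
    fix y assume "y \<in> \<psi> ` (I \<times> {..<L})"
    then obtain i q where iq: "i \<in> I" "q < L" "y = b0 + P + i + P * q" unfolding \<psi>_def by auto
    have "i \<le> P" using iq I by auto
    have "P * q + P \<le> P * L" using iq by (metis add.commute mult_Suc_right mult_le_mono2 Suc_leI)
    then have "y \<le> b0 + P * (L + 1)" using iq \<open>i \<le> P\<close> by (simp add: algebra_simps)
    moreover have "y > lo" using iq b0gt by simp
    ultimately show "y \<in> {lo<..hi}" using b0le bnd by simp
  qed
  have "real L * sum h I = (\<Sum>(i,q)\<in>I \<times> {..<L}. h i)"
    by (simp add: sum.cartesian_product[symmetric] sum_distrib_left mult.commute sum_constant)
  also have "\<dots> = (\<Sum>x\<in>I \<times> {..<L}. h (\<psi> x))"
  proof (rule sum.cong[OF refl])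
    fix x assume x: "x \<in> I \<times> {..<L}"
    obtain i q where xi: "x = (i, q)" by force
    have "\<psi> x \<in> {lo<..hi}" using sub x by (meson image_subset_iff)
    moreover have "even (\<psi> x) = even i" using P xi unfolding \<psi>_def b0_def by simp
    ultimately show "(case x of (i, q) \<Rightarrow> h i) = h (\<psi> x)" using eq x xi by auto
  qed
  also have "\<dots> = sum h (\<psi> ` (I \<times> {..<L}))" using sum.reindex[OF inj, of h] by (simp add: comp_def)
  also have "\<dots> \<le> sum h {lo<..hi}" by (rule sum_mono2[OF _ sub]) (auto simp: h0)
  finally show ?thesis .
qed



lemma powr_conv:
  fixes x y t r :: real
  assumes "x \<ge> 0" "y \<ge> 0" "0 \<le> t" "t \<le> 1" "r \<ge> 1"
  shows "((1 - t) * x + t * y) powr r \<le> (1 - t) * x powr r + t * y powr r"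
proof (cases "x > 0 \<and> y > 0")
  case True
  then show ?thesis using convex_onD[OF powr_convex[OF assms(5)], of t x y] assms by simp
next
  case False
  have tr: "s powr r \<le> s" if "0 \<le> s" "s \<le> 1" for s :: real
    using powr_mono'[of 1 r s] that assms(5) by simp
  show ?thesis
  proof (cases "x = 0")
    case True
    have "(t * y) powr r = t powr r * y powr r" using assms by (simp add: powr_mult)
    also have "\<dots> \<le> t * y powr r" using tr[of t] assms by (simp add: mult_right_mono)
    finally show ?thesis using True assms by simp
  next
    case False
    then have y0: "y = 0" using \<open>\<not> (x > 0 \<and> y > 0)\<close> assms by auto
    have "((1 - t) * x) powr r = (1 - t) powr r * x powr r" using assms by (simp add: powr_mult)
    also have "\<dots> \<le> (1 - t) * x powr r" using tr[of "1 - t"] assms by (simp add: mult_right_mono)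
    finally show ?thesis using y0 assms by simp
  qed
qed



lemma minkowski_fin:
  fixes S :: "nat set" and a b c :: "nat \<Rightarrow> real" and r :: real
  assumes fin: "finite S" and r: "r \<ge> 1" and tri: "\<And>i. i \<in> S \<Longrightarrow> \<bar>a i\<bar> \<le> \<bar>c i\<bar> + \<bar>b i\<bar>"
  shows "(\<Sum>i\<in>S. \<bar>a i\<bar> powr r) powr (1/r) \<le>
    (\<Sum>i\<in>S. \<bar>c i\<bar> powr r) powr (1/r) + (\<Sum>i\<in>S. \<bar>b i\<bar> powr r) powr (1/r)"
proof -
  define SA where "SA = (\<Sum>i\<in>S. \<bar>a i\<bar> powr r)"
  define SB where "SB = (\<Sum>i\<in>S. \<bar>b i\<bar> powr r)"
  define SC where "SC = (\<Sum>i\<in>S. \<bar>c i\<bar> powr r)"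
  define X where "X = SC powr (1/r)"
  define Y where "Y = SB powr (1/r)"
  have SA0: "SA \<ge> 0" "SB \<ge> 0" "SC \<ge> 0" unfolding SA_def SB_def SC_def by (auto intro: sum_nonneg)
  have XY0: "X \<ge> 0" "Y \<ge> 0" unfolding X_def Y_def by auto
  have Xr: "X powr r = SC" unfolding X_def using r SA0 by (simp add: powr_powr)
  have Yr: "Y powr r = SB" unfolding Y_def using r SA0 by (simp add: powr_powr)
  have mono_root: "SA powr (1/r) \<le> T powr (1/r)" if "SA \<le> T" for T
    using that SA0 r by (simp add: powr_mono2)
  show ?thesis
  proof (cases "X = 0")
    case True
    then have "SC = 0" using Xr r by auto
    then have "\<forall>i\<in>S. \<bar>c i\<bar> powr r = 0" unfolding SC_def using fin
      by (subst sum_nonneg_eq_0_iff[symmetric]) auto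
    then have "\<forall>i\<in>S. c i = 0" by auto
    then have "SA \<le> SB" unfolding SA_def SB_def using tri r
      by (intro sum_mono) (auto intro: powr_mono2)
    then show ?thesis using mono_root[of SB] True unfolding SA_def Y_def X_def SB_def SC_def by simp
  next
    case Xn: False
    show ?thesis
    proof (cases "Y = 0")
      case True
      then have "SB = 0" using Yr r by auto
      then have "\<forall>i\<in>S. \<bar>b i\<bar> powr r = 0" unfolding SB_def using fin
        by (subst sum_nonneg_eq_0_iff[symmetric]) auto
      then have "\<forall>i\<in>S. b i = 0" by auto
      then have "SA \<le> SC" unfolding SA_def SC_def using tri r
        by (intro sum_mono) (auto intro: powr_mono2)
      then show ?thesis using mono_root[of SC] True unfolding SA_def Y_def X_def SB_def SC_def by simp
    next
      case Yn: False
      have Xp: "X > 0" "Y > 0" using Xn Yn XY0 by auto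
      define t where "t = Y / (X + Y)"
      have t01: "0 \<le> t" "t \<le> 1" unfolding t_def using Xp by auto
      have SCp: "SC > 0" "SB > 0" using Xr Yr Xp by auto
      have pt: "\<bar>a i\<bar> powr r \<le> (X + Y) powr r * ((1 - t) * (\<bar>c i\<bar> powr r / SC) + t * (\<bar>b i\<bar> powr r / SB))"
        if i: "i \<in> S" for i
      proof -
        have e: "(X + Y) * ((1 - t) * (\<bar>c i\<bar> / X) + t * (\<bar>b i\<bar> / Y)) = \<bar>c i\<bar> + \<bar>b i\<bar>"
        proof -
          have h1: "1 - t = X / (X + Y)" using Xp unfolding t_def by (simp add: field_simps)
          have h2: "(X + Y) * (X / (X + Y) * (C / X)) = C" for C using Xp by simp
          have h3: "(X + Y) * (Y / (X + Y) * (C / Y)) = C" for C using Xp by simp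
          show ?thesis by (simp only: h1 distrib_left h2) (simp only: t_def h3)
        qed
        have "\<bar>a i\<bar> powr r \<le> (\<bar>c i\<bar> + \<bar>b i\<bar>) powr r" using tri[OF i] r by (simp add: powr_mono2)
        also have "\<dots> = (X + Y) powr r * ((1 - t) * (\<bar>c i\<bar> / X) + t * (\<bar>b i\<bar> / Y)) powr r"
          using e[symmetric] by (simp add: powr_mult)
        also have "\<dots> \<le> (X + Y) powr r * ((1 - t) * (\<bar>c i\<bar> / X) powr r + t * (\<bar>b i\<bar> / Y) powr r)"
          using powr_conv[of "\<bar>c i\<bar> / X" "\<bar>b i\<bar> / Y" t r] Xp t01 r
          by (intro mult_left_mono) auto
        also have "\<dots> = (X + Y) powr r * ((1 - t) * (\<bar>c i\<bar> powr r / SC) + t * (\<bar>b i\<bar> powr r / SB))"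
          using Xr Yr by (simp add: powr_divide)
        finally show ?thesis .
      qed
      have "SA \<le> (\<Sum>i\<in>S. (X + Y) powr r * ((1 - t) * (\<bar>c i\<bar> powr r / SC) + t * (\<bar>b i\<bar> powr r / SB)))"
        unfolding SA_def using pt by (rule sum_mono)
      also have "\<dots> = (\<Sum>i\<in>S. ((X + Y) powr r * (1 - t) / SC) * \<bar>c i\<bar> powr r
             + ((X + Y) powr r * t / SB) * \<bar>b i\<bar> powr r)"
        by (rule sum.cong[OF refl]) (simp add: algebra_simps)
      also have "\<dots> = ((X + Y) powr r * (1 - t) / SC) * SC + ((X + Y) powr r * t / SB) * SB"
        unfolding SC_def SB_def by (simp add: sum.distrib sum_distrib_left)
      also have "\<dots> = (X + Y) powr r" using SCp by (simp add: field_simps)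
      finally have "SA powr (1/r) \<le> ((X + Y) powr r) powr (1/r)" by (rule mono_root)
      also have "\<dots> = X + Y" using Xp r by (simp add: powr_powr)
      finally show ?thesis unfolding SA_def X_def Y_def SB_def SC_def .
    qed
  qed
qed



lemma mono_w:
  assumes mono: "\<forall>s\<in>{1..<d}. w s < w (Suc s)"
  shows "1 \<le> s \<Longrightarrow> s < t \<Longrightarrow> t \<le> d \<Longrightarrow> (w s :: nat) < w t"
proof (induction t)
  case 0 then show ?case by simp
next
  case (Suc t)
  show ?case
  proof (cases "s = t")
    case True then show ?thesis using mono Suc.prems by auto
  next
    case False
    then have "w s < w t" using Suc by auto
    also have "w t < w (Suc t)" using mono Suc.prems False by auto
    finally show ?thesis .
  qed
qed

lemma mono_w_le:
  assumes mono: "\<forall>s\<in>{1..<d}. w s < w (Suc s)"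
  shows "1 \<le> s \<Longrightarrow> s \<le> t \<Longrightarrow> t \<le> d \<Longrightarrow> (w s :: nat) \<le> w t"
  using mono_w[OF mono, of s t] by (cases "s = t") auto

lemma xvec_block:
  assumes mono: "\<forall>s\<in>{1..<d}. w s < w (Suc s)"
    and s: "s \<in> {1..d}" and i: "tup w (s - 1) < i" "i \<le> w s"
  shows "xvec d w a b c k i = (if even i then a s else b s)"
proof -
  have notin: "i \<notin> {tup w (s' - 1)<..w s'}" if s': "s' \<in> {1..d}" "s' \<noteq> s" for s'
  proof (cases "s' < s")
    case True
    then have "w s' \<le> tup w (s - 1)" unfolding tup_def using mono_w_le[OF mono, of s' "s - 1"] s s' by auto
    then show ?thesis using i by auto
  next
    case False
    then have "s < s'" using s' by auto
    then have "w s \<le> tup w (s' - 1)" unfolding tup_def using mono_w_le[OF mono, of s "s' - 1"] s s' by auto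
    then show ?thesis using i by auto
  qed
  have inb: "i \<in> {tup w (s - 1)<..w s}" using i by auto
  have sa: "(\<Sum>s'\<in>{1..d}. a s' * indic ({tup w (s' - 1)<..w s'} \<inter> {i. even i}) i)
      = (\<Sum>s'\<in>{1..d}. if s' = s then (if even i then a s else 0) else 0)"
    by (rule sum.cong[OF refl]) (use notin inb in \<open>auto simp: indic_def\<close>)
  have sb: "(\<Sum>s'\<in>{1..d}. b s' * indic ({tup w (s' - 1)<..w s'} \<inter> {i. odd i}) i)
      = (\<Sum>s'\<in>{1..d}. if s' = s then (if odd i then b s else 0) else 0)"
    by (rule sum.cong[OF refl]) (use notin inb in \<open>auto simp: indic_def\<close>)
  have "w s \<le> w d" using mono_w_le[OF mono, of s d] s by auto
  then have sc: "indic {tup w d<..k} i = 0" using i s unfolding indic_def tup_def by auto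
  show ?thesis unfolding xvec_def sa sb sc using s by simp
qed

lemma xvec_tail:
  assumes mono: "\<forall>s\<in>{1..<d}. w s < w (Suc s)" and d: "d \<ge> 1"
    and i: "w d < i" "i \<le> k"
  shows "xvec d w a b c k i = c"
proof -
  have notin: "i \<notin> {tup w (s' - 1)<..w s'}" if s': "s' \<in> {1..d}" for s'
    using mono_w_le[OF mono, of s' d] s' i by auto
  have za: "(\<Sum>s'\<in>{1..d}. a s' * indic ({tup w (s' - 1)<..w s'} \<inter> {i. even i}) i) = 0"
    by (rule sum.neutral) (use notin in \<open>auto simp: indic_def\<close>)
  have zb: "(\<Sum>s'\<in>{1..d}. b s' * indic ({tup w (s' - 1)<..w s'} \<inter> {i. odd i}) i) = 0"
    by (rule sum.neutral) (use notin in \<open>auto simp: indic_def\<close>)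
  have "tup w d = w d" using d unfolding tup_def by auto
  then show ?thesis unfolding xvec_def za zb using i by (simp add: indic_def)
qed

lemma xvec_out:
  assumes mono: "\<forall>s\<in>{1..<d}. w s < w (Suc s)" and d: "d \<ge> 1" and wd: "w d \<le> k"
    and i: "i = 0 \<or> i > k"
  shows "xvec d w a b c k i = 0"
proof -
  have notin: "i \<notin> {tup w (s' - 1)<..w s'}" if s': "s' \<in> {1..d}" for s'
    using mono_w_le[OF mono, of s' d] s' i wd by auto
  have za: "(\<Sum>s'\<in>{1..d}. a s' * indic ({tup w (s' - 1)<..w s'} \<inter> {i. even i}) i) = 0"
    by (rule sum.neutral) (use notin in \<open>auto simp: indic_def\<close>)
  have zb: "(\<Sum>s'\<in>{1..d}. b s' * indic ({tup w (s' - 1)<..w s'} \<inter> {i. odd i}) i) = 0"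
    by (rule sum.neutral) (use notin in \<open>auto simp: indic_def\<close>)
  have "i \<notin> {tup w d<..k}" using i by auto
  then show ?thesis unfolding xvec_def za zb by (auto simp: indic_def)
qed



lemma block_sum:
  fixes h :: "nat \<Rightarrow> real"
  assumes mono: "\<forall>s\<in>{1..<d}. w s < w (Suc s)"
  shows "D \<le> d \<Longrightarrow> (\<Sum>t\<in>{1..D}. sum h {tup w (t - 1)<..w t}) = sum h {0<..tup w D}"
proof (induction D)
  case 0 then show ?case by (simp add: tup_def)
next
  case (Suc D)
  have le: "tup w D \<le> w (Suc D)"
    using mono Suc.prems unfolding tup_def by (cases "D = 0") (auto intro: less_imp_le)
  have un: "{0<..tup w (Suc D)} = {0<..tup w D} \<union> {tup w D<..w (Suc D)}"
    using le unfolding tup_def by auto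
  have "(\<Sum>t\<in>{1..Suc D}. sum h {tup w (t - 1)<..w t})
      = (\<Sum>t\<in>{1..D}. sum h {tup w (t - 1)<..w t}) + sum h {tup w D<..w (Suc D)}"
    by simp
  also have "\<dots> = sum h {0<..tup w D} + sum h {tup w D<..w (Suc D)}" using Suc by simp
  also have "\<dots> = sum h {0<..tup w (Suc D)}" unfolding un
    by (rule sum.union_disjoint[symmetric]) auto
  finally show ?case .
qed

lemma block_exists:
  assumes mono: "\<forall>s\<in>{1..<d}. w s < w (Suc s)"
  shows "1 \<le> D \<Longrightarrow> D \<le> d \<Longrightarrow> 0 < i \<Longrightarrow> i \<le> w D \<Longrightarrow> \<exists>s\<in>{1..D}. tup w (s - 1) < i \<and> i \<le> w s"
proof (induction D)
  case 0 then show ?case by simp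
next
  case (Suc D)
  show ?case
  proof (cases "D = 0")
    case True then show ?thesis using Suc.prems by (auto simp: tup_def)
  next
    case False
    show ?thesis
    proof (cases "i \<le> w D")
      case True then show ?thesis using Suc False by force
    next
      case nle: False
      then show ?thesis using Suc.prems False by (intro bexI[of _ "Suc D"]) (auto simp: tup_def)
    qed
  qed
qed

lemma pow_gap:
  fixes A :: nat
  assumes "A \<ge> 2" "x \<in> {A ^ (j - 1) | j. j \<ge> 1}" "y \<in> {A ^ (j - 1) | j. j \<ge> 1}" "x < y"
  shows "A * x \<le> y"
proof -
  obtain i j where ij: "x = A ^ i" "y = A ^ j" using assms by blast
  then have "i < j" using assms power_strict_increasing_iff[of A i j] by auto
  then have "A ^ Suc i \<le> A ^ j" using assms by (intro power_increasing) auto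
  then show ?thesis using ij by simp
qed

lemma pow_pos:
  fixes A :: nat
  assumes "A \<ge> 1" "x \<in> {A ^ (j - 1) | j. j \<ge> 1}"
  shows "x \<ge> 1"
  using assms by auto



lemma xvec_sphere:
  assumes mono: "\<forall>s\<in>{1..<d}. w s < w (Suc s)" and d: "d \<ge> 1" and wd: "w d < k"
    and gap: "\<forall>s\<in>{1..d}. tup w (s - 1) + 2 \<le> w s"
    and u: "in_sphere_u d a b c"
  shows "xvec d w a b c k \<in> sphere_inf k"
proof -
  let ?x = "xvec d w a b c k"
  define U where "U = {\<bar>a s\<bar> | s. s \<in> {1..d}} \<union> {\<bar>b s\<bar> | s. s \<in> {1..d}} \<union> {\<bar>c\<bar>}"
  have finU: "finite U" unfolding U_def by auto
  have MU: "Max U = 1" using u unfolding in_sphere_u_def U_def by simp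
  have Ule: "y \<le> 1" if "y \<in> U" for y using Max_ge[OF finU that] MU by simp
  have oneU: "1 \<in> U" using Max_in[OF finU] MU unfolding U_def by auto
  have xU: "\<bar>?x i\<bar> \<in> U" if i: "i \<in> {1..k}" for i
  proof (cases "i \<le> w d")
    case True
    then obtain s where s: "s \<in> {1..d}" "tup w (s - 1) < i" "i \<le> w s"
      using block_exists[OF mono, of d i] d i by auto
    then show ?thesis using xvec_block[OF mono s] unfolding U_def by auto
  next
    case False
    then show ?thesis using xvec_tail[OF mono d, of i k] i unfolding U_def by auto
  qed
  have ex1: "\<exists>i\<in>{1..k}. \<bar>?x i\<bar> = 1"
  proof -
    have "(\<exists>s\<in>{1..d}. \<bar>a s\<bar> = 1) \<or> (\<exists>s\<in>{1..d}. \<bar>b s\<bar> = 1) \<or> \<bar>c\<bar> = 1"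
      using oneU unfolding U_def by auto
    moreover
    have blk: "\<exists>i\<in>{1..k}. ?x i = (if P then a s else b s)" if s: "s \<in> {1..d}" for s P
    proof -
      define i0 where "i0 = tup w (s - 1) + 1"
      have ws: "w s \<le> w d" using mono_w_le[OF mono, of s d] s by auto
      have in1: "tup w (s - 1) < i0" "i0 \<le> w s" "tup w (s - 1) < Suc i0" "Suc i0 \<le> w s"
      proof -
        have "tup w (s - 1) + 2 \<le> w s" using gap s by blast
        then show "tup w (s - 1) < i0" "i0 \<le> w s" "tup w (s - 1) < Suc i0" "Suc i0 \<le> w s"
          unfolding i0_def by auto
      qed
      have k1: "i0 \<in> {1..k}" "Suc i0 \<in> {1..k}" using in1 ws wd unfolding i0_def by auto
      have v1: "?x i0 = (if even i0 then a s else b s)" by (rule xvec_block[OF mono s in1(1,2)])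
      have v2: "?x (Suc i0) = (if even (Suc i0) then a s else b s)" by (rule xvec_block[OF mono s in1(3,4)])
      show ?thesis
      proof (cases "P = even i0")
        case True then show ?thesis using v1 k1 by (intro bexI[of _ i0]) auto
      next
        case False then show ?thesis using v2 k1 by (intro bexI[of _ "Suc i0"]) auto
      qed
    qed
    ultimately show ?thesis
    proof (elim disjE bexE)
      fix s assume "s \<in> {1..d}" "\<bar>a s\<bar> = 1"
      then show ?thesis using blk[of s True] by force
    next
      fix s assume "s \<in> {1..d}" "\<bar>b s\<bar> = 1"
      then show ?thesis using blk[of s False] by force
    next
      assume "\<bar>c\<bar> = 1"
      then show ?thesis using xvec_tail[OF mono d, of k k] wd by (intro bexI[of _ k]) auto
    qed
  qed
  have "norm_inf k ?x = 1" unfolding norm_inf_def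
  proof (rule Max_eqI)
    show "finite (insert 0 ((\<lambda>i. \<bar>?x i\<bar>) ` {1..k}))" by simp
    show "y \<le> 1" if "y \<in> insert 0 ((\<lambda>i. \<bar>?x i\<bar>) ` {1..k})" for y
      using that xU Ule by auto
    show "1 \<in> insert 0 ((\<lambda>i. \<bar>?x i\<bar>) ` {1..k})" using ex1 by force
  qed
  moreover have "\<forall>i. i \<notin> {1..k} \<longrightarrow> ?x i = 0"
  proof (intro allI impI)
    fix i assume "i \<notin> {1..k}"
    then have "i = 0 \<or> i > k" by auto
    then show "?x i = 0" by (rule xvec_out[OF mono d less_imp_le[OF wd]])
  qed
  ultimately show ?thesis unfolding sphere_inf_def by simp
qed



lemma aux_div: "(x::real) > 0 \<Longrightarrow> y > 0 \<Longrightarrow> y \<le> 4 * x \<Longrightarrow> 1 / x \<le> 4 / y"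
  by (simp add: field_simps)

theorem proposition3p5:
  fixes r \<epsilon> :: real and d k A :: nat
    and m n :: "nat \<Rightarrow> nat" and a b :: "nat \<Rightarrow> real" and c :: real
    and F :: "(nat \<Rightarrow> real) \<Rightarrow> (nat \<Rightarrow> real)"
  assumes r: "1 \<le> r" and d: "d \<ge> 1" and eps: "\<epsilon> > 0"
    and A: "A = nat \<lceil>(8 / \<epsilon> + 3) powr r\<rceil>"
    and m: "m \<in> incr_tuples {A ^ (j - 1) | j. j \<ge> 1} d"
    and n: "n \<in> incr_tuples {A ^ (j - 1) | j. j \<ge> 1} d"
    and mn1: "\<forall>s\<in>{1..d}. m s < n s"
    and mn2: "\<forall>s\<in>{1..<d}. n s < m (Suc s)"
    and k: "k > n d"
    and u: "in_sphere_u d a b c"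
    and F_maps: "\<forall>x\<in>sphere_inf k. F x \<in> sphere_lp r k"
    and F_step: "step_preserving k F"
    and xm_dom: "xvec d m a b c k \<in> sphere_inf k"
    and F_zero: "\<forall>i\<in>{m d<..k}. F (xvec d m a b c k) i = 0"
  shows "norm_lp r k (\<lambda>i. F (xvec d m a b c k) i - F (xvec d n a b c k) i) > 1 - \<epsilon>"
proof (cases "\<epsilon> > 1")
  case True
  have "norm_lp r k (\<lambda>i. F (xvec d m a b c k) i - F (xvec d n a b c k) i) \<ge> 0"
    unfolding norm_lp_def by simp
  then show ?thesis using True by linarith
next
  case False
  then have eps1: "\<epsilon> \<le> 1" by simp
  define M where "M = {A ^ (j - 1) | j. j \<ge> 1}"
  define Bv where "Bv = 8 / \<epsilon> + 3"
  have Bv11: "Bv \<ge> 11" unfolding Bv_def using eps eps1 by (simp add: field_simps)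
  have BvA: "Bv powr r \<le> real A" unfolding A Bv_def by linarith
  have Bvr: "Bv \<le> Bv powr r" using powr_mono[of 1 r Bv] r Bv11 by simp
  have A11: "A \<ge> 11" using Bv11 Bvr BvA by linarith
  define L where "L = (A - 3) div 2"
  have L3: "2 * L + 3 \<le> A" unfolding L_def using A11 by auto
  have L4: "real A \<le> 4 * real L" unfolding L_def using A11 by linarith
  have Lpos: "L > 0" using L4 A11 by auto
  have mm: "\<forall>s\<in>{1..<d}. m s < m (Suc s)" and mM: "\<forall>s\<in>{1..d}. m s \<in> M"
    using m unfolding incr_tuples_def M_def by auto
  have nm: "\<forall>s\<in>{1..<d}. n s < n (Suc s)" and nM: "\<forall>s\<in>{1..d}. n s \<in> M"
    using n unfolding incr_tuples_def M_def by auto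
  have A2: "A \<ge> 2" using A11 by simp
  have pg: "A * x \<le> y" if "x \<in> M" "y \<in> M" "x < y" for x y
    using pow_gap[OF A2, of x y] that unfolding M_def by blast
  have gap1: "A * m s \<le> n s" if "s \<in> {1..d}" for s
  proof -
    have "m s \<in> M" "n s \<in> M" "m s < n s" using that mM nM mn1 by auto
    then show ?thesis by (rule pg)
  qed
  have gap2: "A * n s \<le> m (Suc s)" if "s \<in> {1..<d}" for s
  proof -
    have "Suc s \<in> {1..d}" "s \<in> {1..d}" using that by auto
    then have "n s \<in> M" "m (Suc s) \<in> M" "n s < m (Suc s)" using that mM nM mn2 by auto
    then show ?thesis by (rule pg)
  qed
  have mpos: "m s \<ge> 1" if "s \<in> {1..d}" for s
  proof -
    have "m s \<in> M" using mM that by blast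
    then obtain j where "m s = A ^ (j - 1)" unfolding M_def by blast
    then show ?thesis using A2 by (simp add: one_le_power)
  qed
  have "d \<in> {1..d}" using d by simp
  then have "m d < n d" using mn1 by blast
  then have md_lt: "m d < k" using k by linarith

  define xm where "xm = xvec d m a b c k"
  define xn where "xn = xvec d n a b c k"
  define hm where "hm = (\<lambda>i. \<bar>F xm i\<bar> powr r)"
  define hn where "hn = (\<lambda>i. \<bar>F xn i\<bar> powr r)"
  have hm0: "\<And>i. hm i \<ge> 0" and hn0: "\<And>i. hn i \<ge> 0" unfolding hm_def hn_def by auto
  have n_gap: "\<forall>s\<in>{1..d}. tup n (s - 1) + 2 \<le> n s"
  proof
    fix s assume s: "s \<in> {1..d}"
    show "tup n (s - 1) + 2 \<le> n s"
    proof (cases "s = 1")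
      case True
      have "1 \<in> {1..d}" using d by simp
      then have "1 \<le> m 1" "m 1 < n 1" using mpos mn1 by auto
      then show ?thesis using True by (simp add: tup_def)
    next
      case False
      have "s - 1 \<in> {1..<d}" "Suc (s - 1) = s" using s False by auto
      then have "n (s - 1) < m s" using mn2 by metis
      moreover have "m s < n s" using mn1 s by blast
      ultimately show ?thesis using False s unfolding tup_def by auto
    qed
  qed
  have xn_dom: "xn \<in> sphere_inf k" unfolding xn_def by (rule xvec_sphere[OF nm d k n_gap u])
  have xm_dom': "xm \<in> sphere_inf k" using xm_dom unfolding xm_def .
  have sum_one: "sum (\<lambda>i. \<bar>F x i\<bar> powr r) {1..k} = 1" if "x \<in> sphere_inf k" for x
  proof -
    have "norm_lp r k (F x) = 1" using F_maps that unfolding sphere_lp_def by auto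
    then have e: "(\<Sum>i\<in>{1..k}. \<bar>F x i\<bar> powr r) powr (1 / r) = 1" unfolding norm_lp_def .
    have "(\<Sum>i\<in>{1..k}. \<bar>F x i\<bar> powr r) = ((\<Sum>i\<in>{1..k}. \<bar>F x i\<bar> powr r) powr (1 / r)) powr r"
      using r by (simp add: powr_powr sum_nonneg)
    then show ?thesis using e by simp
  qed
  have sm1: "sum hm {1..k} = 1" unfolding hm_def by (rule sum_one[OF xm_dom'])
  have sn1: "sum hn {1..k} = 1" unfolding hn_def by (rule sum_one[OF xn_dom])
  have stepm: "F xm i = F xm j" if "i \<in> {1..k}" "j \<in> {1..k}" "xm i = xm j" for i j
    using F_step xm_dom' that unfolding step_preserving_def by blast
  have stepn: "F xn i = F xn j" if "i \<in> {1..k}" "j \<in> {1..k}" "xn i = xn j" for i j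
    using F_step xn_dom that unfolding step_preserving_def by blast

  define Gt where "Gt = (\<lambda>t. {tup n (t - 1)<..m t})"
  define Bt where "Bt = (\<lambda>t. {tup m (t - 1)<..tup n (t - 1)})"
  have mle: "m s \<le> m d" if "s \<in> {1..d}" for s using mono_w_le[OF mm, of s d] that by auto
  have nle: "n s \<le> n d" if "s \<in> {1..d}" for s using mono_w_le[OF nm, of s d] that by auto
  have prev: "n (t - 1) < m t" "m (t - 1) < n (t - 1)" if "t \<in> {2..d}" for t
  proof -
    have "t - 1 \<in> {1..<d}" "Suc (t - 1) = t" "t - 1 \<in> {1..d}" using that by auto
    then show "n (t - 1) < m t" "m (t - 1) < n (t - 1)" using mn2 mn1 by metis+
  qed
  have tup_le0: "tup m (t - 1) \<le> tup n (t - 1) \<and> tup n (t - 1) < m t" if t: "t \<in> {1..d}" for t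
  proof (cases "t = 1")
    case True
    have "1 \<in> {1..d}" using d by simp
    then have "1 \<le> m 1" using mpos by blast
    then show ?thesis using True by (simp add: tup_def)
  next
    case False then have t2: "t \<in> {2..d}" using t by auto
    have "t \<noteq> 1" "t - 1 \<noteq> 0" using False t by auto
    then show ?thesis using prev[OF t2] by (simp add: tup_def)
  qed
  have tup_le: "tup m (t - 1) \<le> tup n (t - 1)" "tup n (t - 1) < m t" if t: "t \<in> {1..d}" for t
    using tup_le0[OF t] by auto
  have claim1: "real L * sum hm (Bt t) \<le> sum hm (Gt t)" if t: "t \<in> {1..d}" for t
  proof (cases "t = 1")
    case True then show ?thesis unfolding Bt_def Gt_def by (simp add: tup_def sum_nonneg hm0)
  next
    case False
    then have t2: "t \<in> {2..d}" using t by auto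
    have tp: "tup m (t - 1) = m (t - 1)" "tup n (t - 1) = n (t - 1)" using t2 by (auto simp: tup_def)
    have "real L * sum hm (Bt t) \<le> sum hm {n (t - 1)<..m t}"
    proof (rule fiber_sum[where P = "2 * n (t - 1)"])
      show "\<And>j. 0 \<le> hm j" by (rule hm0)
      show "Bt t \<subseteq> {1..2 * n (t - 1)}" unfolding Bt_def tp by auto
      show "even (2 * n (t - 1))" by simp
      show "0 < 2 * n (t - 1)" using prev[OF t2] by auto
      have "n (t - 1) * (2 * L + 3) \<le> n (t - 1) * A" by (rule mult_left_mono[OF L3]) simp
      moreover have "A * n (t - 1) \<le> m t"
      proof -
        have "t - 1 \<in> {1..<d}" "Suc (t - 1) = t" using t2 by auto
        then show ?thesis using gap2[of "t - 1"] by metis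
      qed
      ultimately show "n (t - 1) + 2 * n (t - 1) * (L + 1) \<le> m t" by (simp add: algebra_simps)
      fix i j assume i: "i \<in> Bt t" and j: "j \<in> {n (t - 1)<..m t}" and par: "even i = even j"
      have ib: "tup m (t - 1) < i" "i \<le> m t" using i prev[OF t2] unfolding Bt_def tp by auto
      have jb: "tup m (t - 1) < j" "j \<le> m t" using j prev[OF t2] unfolding tp by auto
      have "xm i = xm j" unfolding xm_def
        using xvec_block[OF mm t ib] xvec_block[OF mm t jb] par by simp
      moreover have "i \<in> {1..k}" "j \<in> {1..k}" using ib jb mle[OF t] md_lt by auto
      ultimately show "hm j = hm i" unfolding hm_def using stepm by metis
    qed
    then show ?thesis unfolding Gt_def tp .
  qed
  have claim2: "real L * sum hn (Gt t) \<le> sum hn {m t<..n t}" if t: "t \<in> {1..d}" for t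
  proof (rule fiber_sum[where P = "2 * m t"])
    show "\<And>j. 0 \<le> hn j" by (rule hn0)
    show "Gt t \<subseteq> {1..2 * m t}" unfolding Gt_def by auto
    show "even (2 * m t)" by simp
    show "0 < 2 * m t" using mpos[OF t] by auto
    have "m t * (2 * L + 3) \<le> m t * A" by (rule mult_left_mono[OF L3]) simp
    moreover have "A * m t \<le> n t" using gap1[OF t] .
    ultimately show "m t + 2 * m t * (L + 1) \<le> n t" by (simp add: algebra_simps)
    fix i j assume i: "i \<in> Gt t" and j: "j \<in> {m t<..n t}" and par: "even i = even j"
    have ib: "tup n (t - 1) < i" "i \<le> n t" using i mn1 t unfolding Gt_def by fastforce+
    have jb: "tup n (t - 1) < j" "j \<le> n t" using j tup_le[OF t] by auto
    have "xn i = xn j" unfolding xn_def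
      using xvec_block[OF nm t ib] xvec_block[OF nm t jb] par by simp
    moreover have "i \<in> {1..k}" "j \<in> {1..k}" using ib jb nle[OF t] k by auto
    ultimately show "hn j = hn i" unfolding hn_def using stepn by metis
  qed

  define G where "G = (\<Union>t\<in>{1..d}. Gt t)"
  have Gdisj: "Gt t \<inter> Gt t' = {}" if "t \<in> {1..d}" "t' \<in> {1..d}" "t \<noteq> t'" for t t'
  proof -
    have "Gt t \<inter> Gt t' = {}" if tt: "t \<in> {1..d}" "t' \<in> {1..d}" "t < t'" for t t'
    proof -
      have "n t \<le> n (t' - 1)" using mono_w_le[OF nm, of t "t' - 1"] tt by auto
      moreover have "tup n (t' - 1) = n (t' - 1)" using tt by (auto simp: tup_def)
      moreover have "m t < n t" using mn1 tt by auto
      ultimately show ?thesis unfolding Gt_def by auto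
    qed
    then show ?thesis using that by (metis Int_commute linorder_neqE_nat)
  qed
  have sumG: "sum h G = (\<Sum>t\<in>{1..d}. sum h (Gt t))" for h :: "nat \<Rightarrow> real"
    unfolding G_def
    apply (rule sum.UNION_disjoint)
      apply simp
     apply (simp add: Gt_def)
    using Gdisj apply blast
    done
  have Gsub: "G \<subseteq> {1..k}" unfolding G_def Gt_def using mle md_lt by fastforce
  have blk: "sum hm {tup m (t - 1)<..m t} = sum hm (Bt t) + sum hm (Gt t)" if t: "t \<in> {1..d}" for t
  proof -
    have "{tup m (t - 1)<..m t} = Bt t \<union> Gt t" unfolding Bt_def Gt_def using tup_le[OF t] by auto
    moreover have "Bt t \<inter> Gt t = {}" unfolding Bt_def Gt_def by auto
    ultimately show ?thesis by (simp add: sum.union_disjoint Bt_def Gt_def)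
  qed
  have "sum hm {0<..m d} = (\<Sum>t\<in>{1..d}. sum hm {tup m (t - 1)<..m t})"
    using block_sum[OF mm, of d hm] d by (simp add: tup_def)
  also have "\<dots> = (\<Sum>t\<in>{1..d}. sum hm (Bt t)) + sum hm G"
    using blk by (simp add: sum.distrib sumG)
  finally have e1: "sum hm {0<..m d} = (\<Sum>t\<in>{1..d}. sum hm (Bt t)) + sum hm G" .
  have "{1..k} = {0<..m d} \<union> {m d<..k}" using md_lt by auto
  then have "sum hm {1..k} = sum hm {0<..m d} + sum hm {m d<..k}"
    by (simp add: sum.union_disjoint)
  moreover have "sum hm {m d<..k} = 0" using F_zero unfolding hm_def xm_def using r by simp
  ultimately have tot: "(\<Sum>t\<in>{1..d}. sum hm (Bt t)) + sum hm G = 1" using sm1 e1 by simp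
  have "real L * (\<Sum>t\<in>{1..d}. sum hm (Bt t)) = (\<Sum>t\<in>{1..d}. real L * sum hm (Bt t))"
    by (rule sum_distrib_left)
  also have "\<dots> \<le> (\<Sum>t\<in>{1..d}. sum hm (Gt t))" by (rule sum_mono) (rule claim1)
  finally have "real L * (\<Sum>t\<in>{1..d}. sum hm (Bt t)) \<le> sum hm G" unfolding sumG .
  moreover have "(\<Sum>t\<in>{1..d}. sum hm (Bt t)) = 1 - sum hm G" using tot by linarith
  ultimately have SG1: "real L * (1 - sum hm G) \<le> sum hm G" by simp
  have SGle: "sum hm G \<le> 1" using sum_mono2[OF _ Gsub, of hm] hm0 sm1 by simp
  have SG: "sum hm G \<ge> 1 - 1 / real L"
  proof -
    have "1 - sum hm G \<le> sum hm G / real L" using SG1 Lpos by (simp add: field_simps)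
    also have "\<dots> \<le> 1 / real L" using SGle Lpos by (simp add: divide_right_mono)
    finally show ?thesis by simp
  qed
  define J where "J = (\<Union>t\<in>{1..d}. {m t<..n t})"
  have Jdisj: "{m t<..n t} \<inter> {m t'<..n t'} = {}" if "t \<in> {1..d}" "t' \<in> {1..d}" "t \<noteq> t'" for t t'
  proof -
    have "{m t<..n t} \<inter> {m t'<..n t'} = {}" if tt: "t \<in> {1..d}" "t' \<in> {1..d}" "t < t'" for t t'
    proof -
      have "m (Suc t) \<le> m t'" using mono_w_le[OF mm, of "Suc t" t'] tt by auto
      moreover have "n t < m (Suc t)" using mn2 tt by auto
      ultimately show ?thesis by auto
    qed
    then show ?thesis using that by (metis Int_commute linorder_neqE_nat)
  qed
  have sumJ: "sum hn J = (\<Sum>t\<in>{1..d}. sum hn {m t<..n t})"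
    unfolding J_def
    apply (rule sum.UNION_disjoint)
      apply simp
     apply simp
    using Jdisj apply blast
    done
  have Jsub: "J \<subseteq> {1..k}" unfolding J_def using nle k by fastforce
  have "real L * sum hn G = (\<Sum>t\<in>{1..d}. real L * sum hn (Gt t))"
    unfolding sumG by (rule sum_distrib_left)
  also have "\<dots> \<le> sum hn J" unfolding sumJ by (rule sum_mono) (rule claim2)
  also have "\<dots> \<le> 1" using sum_mono2[OF _ Jsub, of hn] hn0 sn1 by simp
  finally have TG: "sum hn G \<le> 1 / real L" using Lpos by (simp add: field_simps)

  have finG: "finite G" using Gsub finite_subset by blast
  have mink: "(\<Sum>i\<in>G. \<bar>F xm i\<bar> powr r) powr (1/r) \<le>
    (\<Sum>i\<in>G. \<bar>F xm i - F xn i\<bar> powr r) powr (1/r) + (\<Sum>i\<in>G. \<bar>F xn i\<bar> powr r) powr (1/r)"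
    by (rule minkowski_fin[OF finG r]) linarith
  have "(\<Sum>i\<in>G. \<bar>F xm i - F xn i\<bar> powr r) \<le> (\<Sum>i\<in>{1..k}. \<bar>F xm i - F xn i\<bar> powr r)"
    by (rule sum_mono2[OF _ Gsub]) auto
  then have nrm: "(\<Sum>i\<in>G. \<bar>F xm i - F xn i\<bar> powr r) powr (1/r)
      \<le> norm_lp r k (\<lambda>i. F xm i - F xn i)"
    unfolding norm_lp_def using r by (intro powr_mono2) (auto intro: sum_nonneg)
  have SGr: "sum hm G \<le> sum hm G powr (1/r)"
    using powr_mono'[of "1/r" 1 "sum hm G"] r SGle sum_nonneg[of G hm] hm0 by simp
  have TGr: "sum hn G powr (1/r) \<le> (1 / real L) powr (1/r)"
    using TG r sum_nonneg[of G hn] hn0 by (intro powr_mono2) auto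
  have Bvpos: "Bv > 0" using Bv11 by simp
  have Bvrpos: "Bv powr r > 0" using Bvpos by simp
  have invL: "1 / real L \<le> 4 / Bv powr r"
  proof -
    have "real A \<le> 4 * real L" by (rule L4)
    then have "Bv powr r \<le> 4 * real L" using BvA by linarith
    moreover have "real L > 0" using Lpos by simp
    ultimately show ?thesis using Bvrpos aux_div by blast
  qed
  have i1: "1 / real L \<le> 4 / Bv"
    using invL Bvr Bvpos by (meson divide_left_mono order.trans less_imp_le zero_le_numeral
        mult_pos_pos Bvrpos)
  have "(1 / real L) powr (1/r) \<le> (4 / Bv powr r) powr (1/r)"
    using invL Lpos r by (intro powr_mono2) auto
  also have "\<dots> = 4 powr (1/r) / Bv" using Bvpos r by (simp add: powr_divide powr_powr)
  also have "\<dots> \<le> 4 / Bv"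
  proof -
    have "4 powr (1/r) \<le> (4::real) powr 1" using r by (intro powr_mono) auto
    then show ?thesis using Bvpos by (simp add: divide_right_mono)
  qed
  finally have i2: "(1 / real L) powr (1/r) \<le> 4 / Bv" .
  have i3: "8 / Bv < \<epsilon>" unfolding Bv_def using eps by (simp add: field_simps)
  have "1 - \<epsilon> < sum hm G - sum hn G powr (1/r)" using SG i1 i2 i3 TGr by linarith
  also have "\<dots> \<le> sum hm G powr (1/r) - sum hn G powr (1/r)" using SGr by linarith
  also have "\<dots> \<le> norm_lp r k (\<lambda>i. F xm i - F xn i)" using mink nrm unfolding hm_def hn_def by linarith
  finally show ?thesis unfolding xm_def xn_def .
qed

end
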